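(* Let $\rho\in\mathbb N\cup\{\infty\}$ and let $D$ be a Van Kampen diagram over $X_\rho$. 1. If $C$ is a simply connected cluster of $D$, then $\|\partial C\|_1\le 3\,\mathrm{Area}(D)+\|\partial D\|_1$. 2. If moreover $C$ is standardly filled, then $\mathrm{Area}(C)=\mathrm{length}(\partial C)-2$ and $\|C\|_\infty\le\|\partial C\|_1$.
   Context: Setting. $G=\langle S\mid\mathcal R\rangle$ is a finite presentation, $S$ is finite symmetric, and each relator has length 2 or 3. $H_1,\dots,H_n\le G$ are subgroups, and $S_i\subset S$ is a finite symmetric generating set of $H_i$. Truncated relative presentation. For $\rho\in\mathbb N\cup\{\infty\}$, let $\tilde H_i=\langle\tilde S_i\mid$ words of length $\le\rho$ over $S_i$ trivial in $H_i\rangle$, with $\tilde S_i$ a copy of $S_i$. Let $p_i:\tilde H_i\to H_i$ be the natural epimorphism. Put $\hat S=S\sqcup\tilde H_1\sqcup\dots\sqcup\tilde H_n$, where each element of $\tilde H_i$ is a letter. $X_\rho$ is the presentation of $G$ with generators $\hat S$ and relators: - $\mathcal R'$, consisting of $\mathcal R$ together with the words $\tilde s^{-1}p_i(\tilde s)$ for $\tilde s\in\tilde S_i$; - for each $i$, all words of at most 3 letters of $\tilde H_i$ whose product is trivial in $\tilde H_i$. Complexity. $\|s\|=1$ for $s\in S$. For $a\in\tilde H_i$, $\|a\|$ is the word length of $a$ with respect to $\tilde S_i$. For a path or diagram, $\|\cdot\|_1$ and $\|\cdot\|_\infty$ are the sum and the maximum of the complexities of its edge labels. $\mathrm{Area}$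 is the number of 2-cells, and $\mathrm{length}$ is the number of edges. Clusters. A 2-cell has type $\mathcal R'$ or type $\tilde H_i$ according to its relator. Two cells of the same type $\tilde H_i$ sharing an edge are cluster-adjacent. A cluster is the closure of an equivalence class of the transitive closure of this relation. For a cluster $C$, $\partial C$ is the union of the closed edges of $C$ lying in exactly one 2-cell of $C$. Standard filling. Suppose $C$ is simply connected, so that $\partial C$ is an embedded circle labeled cyclically $a_1,\dots,a_m\in\tilde H_i$. $C$ is standardly filled if it consists of $m-2$ triangles, all of whose vertices lie on $\partial C$, with interior edges joining the initial vertex to the vertices after $a_1\cdots a_j$ and labeled by the element $a_1\cdots a_j\in\tilde H_i$ ($j\le m-2$), i.e. a fan triangulation. *)

theory Defs
  imports Main "HOL-Library.Extended_Nat"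
begin

text \<open>Letters of the alphabet hat-S: a generator of S, or an element of the
  truncated group tilde-H_i (for index i), the latter represented by its
  equivalence class of words over S_i.\<close>
datatype 's letter = Gen 's | Sub nat "'s list set"

record 's setting =
  gS   :: "'s set"
  giv  :: "'s \<Rightarrow> 's"
  gR   :: "'s list set"
  nsub :: nat                   \<comment> \<open>number n of subgroups (indices 0..n-1)\<close>
  gSi  :: "nat \<Rightarrow> 's set"
  rho  :: enat

definition valid_setting :: "'s setting \<Rightarrow> bool" where
  "valid_setting P \<longleftrightarrow>
     finite (gS P) \<and> (\<forall>s\<in>gS P. giv P s \<in> gS P \<and> giv P (giv P s) = s) \<and>
     finite (gR P) \<and> (\<forall>r\<in>gR P. set r \<subseteq> gS P \<and> (length r = 2 \<or> length r = 3)) \<and>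
     (\<forall>i<nsub P. gSi P i \<subseteq> gS P \<and> (\<forall>s\<in>gSi P i. giv P s \<in> gSi P i))"

inductive weq :: "'a set \<Rightarrow> ('a \<Rightarrow> 'a) \<Rightarrow> 'a list set \<Rightarrow> 'a list \<Rightarrow> 'a list \<Rightarrow> bool"
  for A iv Rel where
  weq_refl: "set w \<subseteq> A \<Longrightarrow> weq A iv Rel w w"
| weq_del: "set u \<subseteq> A \<Longrightarrow> set v \<subseteq> A \<Longrightarrow> set r \<subseteq> A \<Longrightarrow>
      r \<in> Rel \<union> {[a, iv a] | a. a \<in> A} \<Longrightarrow> weq A iv Rel (u @ r @ v) (u @ v)"
| weq_sym: "weq A iv Rel w v \<Longrightarrow> weq A iv Rel v w"
| weq_trans: "weq A iv Rel u v \<Longrightarrow> weq A iv Rel v w \<Longrightarrow> weq A iv Rel u w"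

definition wcls :: "'a set \<Rightarrow> ('a \<Rightarrow> 'a) \<Rightarrow> 'a list set \<Rightarrow> 'a list \<Rightarrow> 'a list set" where
  "wcls A iv Rel w = {v. weq A iv Rel w v}"

definition gtriv :: "'s setting \<Rightarrow> 's list \<Rightarrow> bool" where
  "gtriv P w \<longleftrightarrow> weq (gS P) (giv P) (gR P) w []"

definition Hrel_trunc :: "'s setting \<Rightarrow> nat \<Rightarrow> 's list set" where
  "Hrel_trunc P i = {w. set w \<subseteq> gSi P i \<and> enat (length w) \<le> rho P \<and> gtriv P w}"

definition hcls :: "'s setting \<Rightarrow> nat \<Rightarrow> 's list \<Rightarrow> 's list set" where
  "hcls P i w = wcls (gSi P i) (giv P) (Hrel_trunc P i) w"

definition Hgrp :: "'s setting \<Rightarrow> nat \<Rightarrow> 's list set set" where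
  "Hgrp P i = {hcls P i w | w. set w \<subseteq> gSi P i}"

definition hprod :: "'s setting \<Rightarrow> nat \<Rightarrow> 's list set list \<Rightarrow> 's list set" where
  "hprod P i cs = hcls P i (concat (map (\<lambda>c. SOME w. w \<in> c) cs))"

definition hatS :: "'s setting \<Rightarrow> 's letter set" where
  "hatS P = Gen ` gS P \<union> {Sub i c | i c. i < nsub P \<and> c \<in> Hgrp P i}"

fun linv :: "'s setting \<Rightarrow> 's letter \<Rightarrow> 's letter" where
  "linv P (Gen s) = Gen (giv P s)"
| "linv P (Sub i c) = Sub i ((\<lambda>w. rev (map (giv P) w)) ` c)"

fun cx :: "'s letter \<Rightarrow> nat" where
  "cx (Gen s) = 1"
| "cx (Sub i c) = (LEAST k. \<exists>w\<in>c. length w = k)"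

fun subel :: "'s letter \<Rightarrow> 's list set" where
  "subel (Sub i c) = c"
| "subel (Gen s) = {}"

definition Rprime :: "'s setting \<Rightarrow> 's letter list set" where
  "Rprime P = (map Gen) ` gR P \<union>
     {[Sub i (hcls P i [giv P s]), Gen s] | i s. i < nsub P \<and> s \<in> gSi P i}"

definition HRel :: "'s setting \<Rightarrow> nat \<Rightarrow> 's letter list set" where
  "HRel P i = {map (Sub i) cs | cs. length cs \<le> 3 \<and> set cs \<subseteq> Hgrp P i \<and>
                                  hprod P i cs = hcls P i []}"

definition XRel :: "'s setting \<Rightarrow> 's letter list set" where
  "XRel P = Rprime P \<union> (\<Union>i<nsub P. HRel P i)"

text \<open>Darts (oriented edges), rv = reversal, nx = successor of a dart along the
  boundary of the face to which it belongs, lab = label, outf = the outer face.\<close>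
record ('d, 's) diagram =
  dts  :: "'d set"
  rvd  :: "'d \<Rightarrow> 'd"
  nxd  :: "'d \<Rightarrow> 'd"
  labd :: "'d \<Rightarrow> 's letter"
  outf :: "'d set"

definition orb :: "('a \<Rightarrow> 'a) \<Rightarrow> 'a \<Rightarrow> 'a set" where
  "orb f x = {(f ^^ k) x | k. True}"

definition faces :: "('d,'s) diagram \<Rightarrow> 'd set set" where
  "faces D = {orb (nxd D) d | d. d \<in> dts D}"

definition cells :: "('d,'s) diagram \<Rightarrow> 'd set set" where
  "cells D = faces D - {outf D}"

text \<open>vertex at which a dart starts (orbit of the vertex rotation nx o rv)\<close>
definition tailv :: "('d,'s) diagram \<Rightarrow> 'd \<Rightarrow> 'd set" where
  "tailv D d = orb (\<lambda>x. nxd D (rvd D x)) d"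

definition headv :: "('d,'s) diagram \<Rightarrow> 'd \<Rightarrow> 'd set" where
  "headv D d = tailv D (rvd D d)"

definition vertices :: "('d,'s) diagram \<Rightarrow> 'd set set" where
  "vertices D = {tailv D d | d. d \<in> dts D}"

definition edges :: "('d,'s) diagram \<Rightarrow> 'd set set" where
  "edges D = {{d, rvd D d} | d. d \<in> dts D}"

definition fpath :: "('d,'s) diagram \<Rightarrow> 'd \<Rightarrow> 'd list" where
  "fpath D d = map (\<lambda>k. (nxd D ^^ k) d) [0..<card (orb (nxd D) d)]"

definition fword :: "('d,'s) diagram \<Rightarrow> 'd \<Rightarrow> 's letter list" where
  "fword D d = map (labd D) (fpath D d)"

definition winv :: "'s setting \<Rightarrow> 's letter list \<Rightarrow> 's letter list" where
  "winv P w = rev (map (linv P) w)"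

definition reads :: "'s setting \<Rightarrow> ('d,'s) diagram \<Rightarrow> 's letter list set \<Rightarrow> 'd set \<Rightarrow> bool" where
  "reads P D Rel f \<longleftrightarrow> (\<exists>d\<in>f. fword D d \<in> Rel \<or> winv P (fword D d) \<in> Rel)"

text \<open>Van Kampen diagram over X_rho: a connected combinatorial map on the
  2-sphere (Euler characteristic 2) with a distinguished outer face, whose
  other faces (the 2-cells) read relators of X_rho.  The diagram without
  edges (a single vertex) is represented by the empty dart set.\<close>
definition vk_diagram :: "'s setting \<Rightarrow> ('d,'s) diagram \<Rightarrow> bool" where
  "vk_diagram P D \<longleftrightarrow>
     finite (dts D) \<and>
     (\<forall>d\<in>dts D. rvd D d \<in> dts D \<and> rvd D d \<noteq> d \<and> rvd D (rvd D d) = d) \<and>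
     bij_betw (nxd D) (dts D) (dts D) \<and>
     (\<forall>d\<in>dts D. \<forall>d'\<in>dts D.
        (d, d') \<in> {(x, y). x \<in> dts D \<and> (y = nxd D x \<or> y = rvd D x)}\<^sup>*) \<and>
     (if dts D = {} then outf D = {}
      else outf D \<in> faces D \<and>
           int (card (vertices D)) - int (card (edges D)) + int (card (faces D)) = 2) \<and>
     (\<forall>d\<in>dts D. labd D d \<in> hatS P \<and> labd D (rvd D d) = linv P (labd D d)) \<and>
     (\<forall>f\<in>cells D. reads P D (XRel P) f)"

definition area :: "('d,'s) diagram \<Rightarrow> nat" where
  "area D = card (cells D)"

definition bdD_norm1 :: "('d,'s) diagram \<Rightarrow> nat" where
  "bdD_norm1 D = (\<Sum>d\<in>outf D. cx (labd D d))"

definition htype :: "'s setting \<Rightarrow> ('d,'s) diagram \<Rightarrow> nat \<Rightarrow> 'd set \<Rightarrow> bool" where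
  "htype P D i f \<longleftrightarrow> f \<in> cells D \<and> reads P D (HRel P i) f"

definition cadj :: "'s setting \<Rightarrow> ('d,'s) diagram \<Rightarrow> nat \<Rightarrow> ('d set \<times> 'd set) set" where
  "cadj P D i = {(f, g). htype P D i f \<and> htype P D i g \<and> (\<exists>d\<in>f. rvd D d \<in> g)}"

definition is_cluster :: "'s setting \<Rightarrow> ('d,'s) diagram \<Rightarrow> nat \<Rightarrow> 'd set set \<Rightarrow> bool" where
  "is_cluster P D i C \<longleftrightarrow> i < nsub P \<and>
     (\<exists>f. htype P D i f \<and> C = {g. (f, g) \<in> (cadj P D i)\<^sup>*})"

definition cdarts :: "('d,'s) diagram \<Rightarrow> 'd set set \<Rightarrow> 'd set" where
  "cdarts D C = \<Union>C \<union> rvd D ` \<Union>C"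

text \<open>boundary of C: the edges lying in exactly one 2-cell of C, each represented
  by its dart lying in a cell of C\<close>
definition bdry :: "('d,'s) diagram \<Rightarrow> 'd set set \<Rightarrow> 'd set" where
  "bdry D C = {d \<in> \<Union>C. rvd D d \<notin> \<Union>C}"

definition bdry_norm1 :: "('d,'s) diagram \<Rightarrow> 'd set set \<Rightarrow> nat" where
  "bdry_norm1 D C = (\<Sum>d\<in>bdry D C. cx (labd D d))"

definition cl_normInf :: "('d,'s) diagram \<Rightarrow> 'd set set \<Rightarrow> nat" where
  "cl_normInf D C = Max {cx (labd D d) | d. d \<in> cdarts D C}"

text \<open>edge paths in the closure of C and their combinatorial homotopy
  (edge-path group of the 2-complex given by the closure of C)\<close>
definition cpath :: "('d,'s) diagram \<Rightarrow> 'd set set \<Rightarrow> 'd list \<Rightarrow> bool" where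
  "cpath D C p \<longleftrightarrow> set p \<subseteq> cdarts D C \<and>
     (\<forall>k. Suc k < length p \<longrightarrow> headv D (p ! k) = tailv D (p ! Suc k))"

inductive chtp :: "('d,'s) diagram \<Rightarrow> 'd set set \<Rightarrow> 'd list \<Rightarrow> 'd list \<Rightarrow> bool"
  for D C where
  chtp_refl: "cpath D C p \<Longrightarrow> chtp D C p p"
| chtp_back: "cpath D C (u @ [d, rvd D d] @ v) \<Longrightarrow> chtp D C (u @ [d, rvd D d] @ v) (u @ v)"
| chtp_face: "e \<in> \<Union>C \<Longrightarrow> cpath D C (u @ fpath D e @ v) \<Longrightarrow>
      chtp D C (u @ fpath D e @ v) (u @ v)"
| chtp_sym: "chtp D C p q \<Longrightarrow> chtp D C q p"
| chtp_trans: "chtp D C p q \<Longrightarrow> chtp D C q r \<Longrightarrow> chtp D C p r"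

definition sc_cluster :: "('d,'s) diagram \<Rightarrow> 'd set set \<Rightarrow> bool" where
  "sc_cluster D C \<longleftrightarrow>
     (\<forall>p. cpath D C p \<and> p \<noteq> [] \<and> headv D (last p) = tailv D (hd p) \<longrightarrow> chtp D C p [])"

text \<open>standard (fan) filling: boundary darts b_0,...,b_{m-1} form an embedded
  circle labelled a_1,...,a_m (a_k = label of b_(k-1)); C has m-2 triangles with
  all vertices on the boundary; the interior edges are e_j (2 <= j <= m-2) from the
  initial vertex to the vertex after a_1...a_j, labelled a_1...a_j.\<close>
definition std_filled :: "'s setting \<Rightarrow> ('d,'s) diagram \<Rightarrow> nat \<Rightarrow> 'd set set \<Rightarrow> bool" where
  "std_filled P D i C \<longleftrightarrow>
    (\<exists>b m e. m = card (bdry D C) \<and> 3 \<le> m \<and>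
       bij_betw b {..<m} (bdry D C) \<and>
       (\<forall>k<m. headv D (b k) = tailv D (b (Suc k mod m))) \<and>
       inj_on (\<lambda>k. tailv D (b k)) {..<m} \<and>
       card C = m - 2 \<and>
       (\<forall>f\<in>C. card f = 3 \<and> (\<forall>d\<in>f. \<exists>k<m. tailv D d = tailv D (b k))) \<and>
       (\<forall>j\<in>{2..m-2}. e j \<in> \<Union>C \<and> rvd D (e j) \<in> \<Union>C \<and>
            tailv D (e j) = tailv D (b 0) \<and> headv D (e j) = tailv D (b j) \<and>
            labd D (e j) = Sub i (hprod P i (map (\<lambda>k. subel (labd D (b k))) [0..<j]))) \<and>
       (\<forall>d\<in>\<Union>C. rvd D d \<in> \<Union>C \<longrightarrow> (\<exists>j\<in>{2..m-2}. d = e j \<or> d = rvd D (e j))))"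

end

theory Submission
  imports Defs
begin

lemma funpow_in: "bij_betw f S S \<Longrightarrow> x \<in> S \<Longrightarrow> (f^^k) x \<in> S"
  by (induction k) (auto simp: bij_betw_def)

lemma inj_funpow: "bij_betw f S S \<Longrightarrow> inj_on (f^^k) S"
proof (induction k)
  case 0 then show ?case by simp
next
  case (Suc k)
  have "(f^^k) ` S \<subseteq> S" using funpow_in[OF Suc.prems] by auto
  hence "inj_on f ((f^^k) ` S)" using Suc.prems by (meson bij_betw_def inj_on_subset)
  thus ?case using Suc comp_inj_on by (metis funpow.simps(2))
qed

lemma period_ex:
  assumes b: "bij_betw f S S" and fin: "finite S" and x: "x \<in> S"
  shows "\<exists>p>0. (f^^p) x = x"
proof -
  have "\<not> inj_on (\<lambda>k. (f^^k) x) {..card S}"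
  proof
    assume "inj_on (\<lambda>k. (f^^k) x) {..card S}"
    hence "card ((\<lambda>k. (f^^k) x) ` {..card S}) = card {..card S}" by (rule card_image)
    moreover have "(\<lambda>k. (f^^k) x) ` {..card S} \<subseteq> S" using funpow_in[OF b x] by auto
    hence "card ((\<lambda>k. (f^^k) x) ` {..card S}) \<le> card S" by (rule card_mono[OF fin])
    ultimately have "Suc (card S) \<le> card S" by simp
    thus False by simp
  qed
  then obtain a c where ac: "a \<noteq> c" "(f^^a) x = (f^^c) x"
    unfolding inj_on_def by auto
  then obtain a c where ac: "a < c" "(f^^a) x = (f^^c) x" by (metis linorder_neqE_nat)
  have inj: "inj_on (f^^a) S" by (rule inj_funpow[OF b])
  have "(f^^a) ((f^^(c-a)) x) = (f^^c) x"
    using ac(1) by (metis funpow_add le_add_diff_inverse less_imp_le o_apply)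
  hence "(f^^(c-a)) x = x" using inj ac(2) funpow_in[OF b x] x unfolding inj_on_def by metis
  thus ?thesis using ac(1) by (intro exI[of _ "c-a"]) auto
qed

lemma funpow_mult_period: "(f^^p) x = x \<Longrightarrow> (f^^(q*p)) x = x"
  by (induction q) (auto simp: funpow_add)

lemma funpow_mod: assumes "(f^^p) x = x" shows "(f^^k) x = (f^^(k mod p)) x"
proof -
  have "(f^^k) x = (f^^(k mod p + (k div p)*p)) x" by simp
  also have "\<dots> = (f^^(k mod p)) ((f^^((k div p)*p)) x)" by (simp only: funpow_add o_apply)
  also have "\<dots> = (f^^(k mod p)) x" using funpow_mult_period[OF assms] by simp
  finally show ?thesis .
qed

lemma orbit_facts:
  assumes b: "bij_betw f S S" and fin: "finite S" and x: "x \<in> S"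
  defines "p \<equiv> (LEAST p. 0<p \<and> (f^^p) x = x)"
  shows "orb f x = (\<lambda>k. (f^^k) x) ` {..<p}"
    and "inj_on (\<lambda>k. (f^^k) x) {..<p}"
    and "card (orb f x) = p"
    and "0 < p" and "(f^^p) x = x"
proof -
  have ex: "\<exists>p. 0<p \<and> (f^^p) x = x" using period_ex[OF b fin x] by auto
  show pp: "0 < p" "(f^^p) x = x" using LeastI_ex[OF ex] unfolding p_def by auto
  show o: "orb f x = (\<lambda>k. (f^^k) x) ` {..<p}"
  proof
    show "orb f x \<subseteq> (\<lambda>k. (f^^k) x) ` {..<p}"
      unfolding orb_def using funpow_mod[OF pp(2)] pp(1) by fastforce
    show "(\<lambda>k. (f^^k) x) ` {..<p} \<subseteq> orb f x" unfolding orb_def by auto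
  qed
  show inj: "inj_on (\<lambda>k. (f^^k) x) {..<p}"
  proof (rule ccontr)
    assume "\<not> ?thesis"
    then obtain a c where ac: "a \<noteq> c" "a < p" "c < p" "(f^^a) x = (f^^c) x"
      unfolding inj_on_def by auto
    then obtain a c where ac: "a < c" "c < p" "(f^^a) x = (f^^c) x"
      by (metis linorder_neqE_nat)
    have inj: "inj_on (f^^a) S" by (rule inj_funpow[OF b])
    have "(f^^a) ((f^^(c-a)) x) = (f^^c) x"
      using ac(1) by (metis funpow_add le_add_diff_inverse less_imp_le o_apply)
    hence "(f^^(c-a)) x = x" using inj ac(3) funpow_in[OF b x] x unfolding inj_on_def by metis
    hence "p \<le> c - a" unfolding p_def using ac(1) by (intro Least_le) auto
    thus False using ac by auto
  qed
  show "card (orb f x) = p" using o inj card_image by fastforce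
qed

lemma orb_trans: "y \<in> orb f x \<Longrightarrow> orb f y \<subseteq> orb f x"
proof
  fix z assume y: "y \<in> orb f x" and z: "z \<in> orb f y"
  obtain j where j: "y = (f^^j) x" using y unfolding orb_def by auto
  obtain k where k: "z = (f^^k) y" using z unfolding orb_def by auto
  have "z = (f^^(k+j)) x" using j k by (simp add: funpow_add)
  thus "z \<in> orb f x" unfolding orb_def by blast
qed

lemma orb_same:
  assumes b: "bij_betw f S S" and fin: "finite S" and x: "x \<in> S" and y: "y \<in> orb f x"
  shows "orb f y = orb f x"
proof -
  obtain j where j: "y = (f^^j) x" using y unfolding orb_def by auto
  obtain p where p: "0 < p" "(f^^p) x = x" using period_ex[OF b fin x] by auto
  have "orb f y \<subseteq> orb f x" by (rule orb_trans[OF y])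
  moreover have "x \<in> orb f y"
  proof -
    have "1*(j+1) \<le> p*(j+1)" using p(1) by (intro mult_right_mono) auto
    hence jl: "j \<le> p*(j+1)" by simp
    have e: "(f^^((j+1)*p)) x = x" by (rule funpow_mult_period[OF p(2)])
    have ar: "p*(j+1) - j + j = (j+1)*p" using jl by (simp add: mult.commute)
    have "(f^^(p*(j+1) - j)) y = (f^^(p*(j+1) - j + j)) x" by (simp only: j funpow_add o_apply)
    also have "\<dots> = (f^^((j+1)*p)) x" by (simp only: ar)
    also have "\<dots> = x" by (rule e)
    finally have "(f^^(p*(j+1) - j)) y = x" .
    thus ?thesis unfolding orb_def by blast
  qed
  hence "orb f x \<subseteq> orb f y" by (rule orb_trans)
  ultimately show ?thesis by blast
qed

lemma cx_linv: "cx (linv P x) = cx x"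
  by (cases x) simp_all

lemma faces_sub:
  assumes vk: "vk_diagram P D" and g: "g \<in> faces D"
  shows "g \<subseteq> dts D"
proof -
  have b: "bij_betw (nxd D) (dts D) (dts D)" using vk unfolding vk_diagram_def by auto
  obtain d0 where d0: "d0 \<in> dts D" "g = orb (nxd D) d0" using g unfolding faces_def by auto
  show ?thesis using funpow_in[OF b d0(1)] d0(2) unfolding orb_def by auto
qed

lemma self_orb: "x \<in> orb f x"
  unfolding orb_def by (auto intro: exI[of _ 0])

lemma face_props:
  assumes vk: "vk_diagram P D" and g: "g \<in> faces D" and d: "d \<in> g"
  shows "orb (nxd D) d = g" "set (fpath D d) = g" "length (fpath D d) = card g"
     "set (fword D d) = labd D ` g"
proof -
  have b: "bij_betw (nxd D) (dts D) (dts D)" and fin: "finite (dts D)"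
    using vk unfolding vk_diagram_def by auto
  obtain d0 where d0: "d0 \<in> dts D" "g = orb (nxd D) d0" using g unfolding faces_def by auto
  have gs: "g \<subseteq> dts D" by (rule faces_sub[OF vk g])
  have dd: "d \<in> dts D" using gs d by auto
  show o: "orb (nxd D) d = g" using orb_same[OF b fin d0(1)] d d0(2) by auto
  have "set (fpath D d) = (\<lambda>k. (nxd D ^^ k) d) ` {..<card (orb (nxd D) d)}"
    unfolding fpath_def by (auto simp: atLeast0LessThan)
  also have "\<dots> = orb (nxd D) d" using orbit_facts[OF b fin dd] by simp
  finally show s: "set (fpath D d) = g" using o by simp
  show "length (fpath D d) = card g" unfolding fpath_def using o by simp
  then show "set (fword D d) = labd D ` g" unfolding fword_def using s by simp
qed

lemma XRel_len: "valid_setting P \<Longrightarrow> w \<in> XRel P \<Longrightarrow> length w \<le> 3"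
  unfolding XRel_def Rprime_def HRel_def valid_setting_def by auto

lemma cell_card:
  assumes vs: "valid_setting P" and vk: "vk_diagram P D" and g: "g \<in> cells D"
  shows "card g \<le> 3"
proof -
  have "reads P D (XRel P) g" using vk g unfolding vk_diagram_def by auto
  then obtain d where d: "d \<in> g" "fword D d \<in> XRel P \<or> winv P (fword D d) \<in> XRel P"
    unfolding reads_def by auto
  have gf: "g \<in> faces D" using g unfolding cells_def by auto
  have "length (fword D d) \<le> 3" using d(2) XRel_len[OF vs] unfolding winv_def by fastforce
  thus ?thesis using face_props(3)[OF vk gf d(1)] unfolding fword_def by simp
qed

lemma HRel_letter: "w \<in> HRel P j \<Longrightarrow> x \<in> set w \<Longrightarrow> \<exists>c. x = Sub j c"
  unfolding HRel_def by auto

lemma HRel_letter2: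
  assumes "w \<in> HRel P j \<or> winv P w \<in> HRel P j" "x \<in> set w"
  shows "\<exists>c. x = Sub j c"
proof (cases "w \<in> HRel P j")
  case True then show ?thesis using HRel_letter assms by metis
next
  case False
  have "linv P x \<in> set (winv P w)" unfolding winv_def using assms by auto
  then obtain c where "linv P x = Sub j c" using HRel_letter False assms by metis
  then show ?thesis by (cases x) auto
qed

lemma Rprime_cx:
  assumes vs: "valid_setting P" and "w \<in> Rprime P" "x \<in> set w" "\<forall>s. x \<noteq> Gen s"
  shows "cx x \<le> 1"
proof -
  from assms obtain i s where ii: "i < nsub P" "s \<in> gSi P i"
     "x = Sub i (hcls P i [giv P s])"
    unfolding Rprime_def by auto
  have "giv P s \<in> gSi P i" using vs ii unfolding valid_setting_def by auto
  hence m: "[giv P s] \<in> hcls P i [giv P s]"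
    unfolding hcls_def wcls_def by (auto intro: weq.weq_refl)
  have "cx x \<le> length [giv P s]" unfolding ii(3) cx.simps
    by (rule Least_le) (use m in blast)
  then show ?thesis by simp
qed

lemma Rprime_cx2:
  assumes vs: "valid_setting P" and "w \<in> Rprime P \<or> winv P w \<in> Rprime P" "x \<in> set w"
    "\<forall>s. x \<noteq> Gen s"
  shows "cx x \<le> 1"
proof (cases "w \<in> Rprime P")
  case True then show ?thesis using Rprime_cx[OF vs] assms by metis
next
  case False
  have "linv P x \<in> set (winv P w)" unfolding winv_def using assms by auto
  moreover have "\<forall>s. linv P x \<noteq> Gen s" using assms(4) by (cases x) auto
  ultimately have "cx (linv P x) \<le> 1" using Rprime_cx[OF vs] False assms by metis
  then show ?thesis by (simp add: cx_linv)
qed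

lemma reads_H_letter:
  assumes vk: "vk_diagram P D" and g: "g \<in> faces D" "reads P D (HRel P j) g" "x \<in> g"
  shows "\<exists>c. labd D x = Sub j c"
proof -
  obtain d where d: "d \<in> g" "fword D d \<in> HRel P j \<or> winv P (fword D d) \<in> HRel P j"
    using g unfolding reads_def by auto
  have "labd D x \<in> set (fword D d)" using face_props(4)[OF vk g(1) d(1)] g by auto
  then show ?thesis using HRel_letter2 d by metis
qed

lemma cluster_htype: "is_cluster P D i C \<Longrightarrow> g \<in> C \<Longrightarrow> htype P D i g"
  unfolding is_cluster_def
  by (auto elim: rtranclE simp: cadj_def)

lemma cluster_closed: "is_cluster P D i C \<Longrightarrow> f \<in> C \<Longrightarrow> (f,g) \<in> cadj P D i \<Longrightarrow> g \<in> C"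
  unfolding is_cluster_def by (auto intro: rtrancl_into_rtrancl)

lemma cluster_letter:
  assumes vk: "vk_diagram P D" and cl: "is_cluster P D i C" and x: "x \<in> \<Union>C"
  shows "\<exists>c. labd D x = Sub i c"
proof -
  obtain f where f: "f \<in> C" "x \<in> f" using x by auto
  have "htype P D i f" using cluster_htype[OF cl f(1)] .
  then show ?thesis using reads_H_letter[OF vk _ _ f(2)] unfolding htype_def cells_def by auto
qed

lemma cluster_sub:
  assumes vk: "vk_diagram P D" and cl: "is_cluster P D i C"
  shows "\<Union>C \<subseteq> dts D"
  using cluster_htype[OF cl] faces_sub[OF vk] unfolding htype_def cells_def by blast

lemma bdry_dart:
  assumes vs: "valid_setting P" and vk: "vk_diagram P D" and cl: "is_cluster P D i C"
    and d: "d \<in> bdry D C"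
  shows "rvd D d \<in> outf D \<or> (cx (labd D d) \<le> 1 \<and> rvd D d \<in> \<Union>(cells D))"
proof -
  obtain f where f: "f \<in> C" "d \<in> f" and nr: "rvd D d \<notin> \<Union>C" using d unfolding bdry_def by auto
  have dd: "d \<in> dts D" using cluster_sub[OF vk cl] f by auto
  obtain c where c: "labd D d = Sub i c" using cluster_letter[OF vk cl] f by blast
  have rd: "rvd D d \<in> dts D" "labd D (rvd D d) = linv P (labd D d)"
    using vk dd unfolding vk_diagram_def by auto
  define g where "g = orb (nxd D) (rvd D d)"
  have gf: "g \<in> faces D" unfolding g_def faces_def using rd by auto
  have rg: "rvd D d \<in> g" unfolding g_def by (rule self_orb)
  show ?thesis
  proof (cases "g = outf D")
    case True then show ?thesis using rg by auto
  next
    case False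
    hence gc: "g \<in> cells D" using gf unfolding cells_def by auto
    have "reads P D (XRel P) g" using vk gc unfolding vk_diagram_def by auto
    then obtain d' where d': "d' \<in> g" "fword D d' \<in> XRel P \<or> winv P (fword D d') \<in> XRel P"
      unfolding reads_def by auto
    have lin: "labd D (rvd D d) \<in> set (fword D d')" using face_props(4)[OF vk gf d'(1)] rg by auto
    have lab: "labd D (rvd D d) = Sub i ((\<lambda>w. rev (map (giv P) w)) ` c)" using rd c by simp
    have "fword D d' \<in> Rprime P \<or> winv P (fword D d') \<in> Rprime P"
    proof (rule ccontr)
      assume nR: "\<not> ?thesis"
      then obtain j where j: "j < nsub P"
          "fword D d' \<in> HRel P j \<or> winv P (fword D d') \<in> HRel P j"
        using d'(2) unfolding XRel_def by auto
      obtain c' where "labd D (rvd D d) = Sub j c'" using HRel_letter2[OF j(2) lin] by blast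
      hence ji: "j = i" using lab by simp
      have "reads P D (HRel P i) g" unfolding reads_def using d' j ji by auto
      hence "htype P D i g" unfolding htype_def using gc by auto
      moreover have "htype P D i f" by (rule cluster_htype[OF cl f(1)])
      ultimately have "(f, g) \<in> cadj P D i" unfolding cadj_def using f(2) rg by auto
      hence "g \<in> C" using cluster_closed[OF cl f(1)] by blast
      thus False using nr rg by auto
    qed
    hence "cx (labd D (rvd D d)) \<le> 1" using Rprime_cx2[OF vs _ lin] lab by auto
    hence "cx (labd D d) \<le> 1" using rd cx_linv by metis
    thus ?thesis using gc rg by auto
  qed
qed

lemma weq_set: "weq A iv Rel u v \<Longrightarrow> set u \<subseteq> A \<and> set v \<subseteq> A"
  by (induction rule: weq.induct) auto

lemma weq_app_right: "weq A iv Rel u u' \<Longrightarrow> set z \<subseteq> A \<Longrightarrow> weq A iv Rel (u @ z) (u' @ z)"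
proof (induction rule: weq.induct)
  case (weq_refl w) then show ?case by (intro weq.weq_refl) simp
next
  case (weq_del u v r)
  then show ?case using weq.weq_del[of u A "v @ z" r Rel iv] by simp
next
  case (weq_sym w v) then show ?case by (auto intro: weq.weq_sym)
next
  case (weq_trans u v w) then show ?case by (meson weq.weq_trans)
qed

lemma weq_app_left: "weq A iv Rel u u' \<Longrightarrow> set z \<subseteq> A \<Longrightarrow> weq A iv Rel (z @ u) (z @ u')"
proof (induction rule: weq.induct)
  case (weq_refl w) then show ?case by (intro weq.weq_refl) simp
next
  case (weq_del u v r)
  then show ?case using weq.weq_del[of "z @ u" A v r Rel iv] by simp
next
  case (weq_sym w v) then show ?case by (auto intro: weq.weq_sym)
next
  case (weq_trans u v w) then show ?case by (meson weq.weq_trans)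
qed

lemma weq_app: "weq A iv Rel u u' \<Longrightarrow> weq A iv Rel v v' \<Longrightarrow> weq A iv Rel (u @ v) (u' @ v')"
  by (meson weq.weq_trans weq_app_left weq_app_right weq_set)

lemma hprod_aux:
  assumes "\<forall>c\<in>set cs. c \<in> Hgrp P i"
  shows "\<exists>v. weq (gSi P i) (giv P) (Hrel_trunc P i) (concat (map (\<lambda>c. SOME w. w \<in> c) cs)) v \<and>
           length v \<le> sum_list (map (\<lambda>c. LEAST k. \<exists>w\<in>c. length w = k) cs)"
  using assms
proof (induction cs)
  case Nil then show ?case by (auto intro: weq.weq_refl)
next
  case (Cons c cs)
  then obtain v where v: "weq (gSi P i) (giv P) (Hrel_trunc P i) (concat (map (\<lambda>c. SOME w. w \<in> c) cs)) v"
     "length v \<le> sum_list (map (\<lambda>c. LEAST k. \<exists>w\<in>c. length w = k) cs)" by auto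
  from Cons.prems obtain w0 where w0: "set w0 \<subseteq> gSi P i" "c = hcls P i w0"
    unfolding Hgrp_def by auto
  have w0c: "w0 \<in> c" using w0 unfolding hcls_def wcls_def by (auto intro: weq.weq_refl)
  hence a: "(SOME w. w \<in> c) \<in> c" by (rule someI)
  obtain m where m: "m \<in> c" "length m = (LEAST k. \<exists>w\<in>c. length w = k)"
    using LeastI_ex[of "\<lambda>k. \<exists>w\<in>c. length w = k"] w0c by blast
  have "weq (gSi P i) (giv P) (Hrel_trunc P i) (SOME w. w \<in> c) m"
    using a m(1) unfolding w0(2) hcls_def wcls_def by (auto intro: weq.weq_trans weq.weq_sym)
  hence "weq (gSi P i) (giv P) (Hrel_trunc P i)
          ((SOME w. w \<in> c) @ concat (map (\<lambda>c. SOME w. w \<in> c) cs)) (m @ v)"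
    using v(1) by (rule weq_app)
  then show ?case using v(2) m(2) by (intro exI[of _ "m @ v"]) simp
qed

lemma hprod_cx:
  assumes "\<forall>c\<in>set cs. c \<in> Hgrp P i"
  shows "cx (Sub i (hprod P i cs)) \<le> sum_list (map (\<lambda>c. LEAST k. \<exists>w\<in>c. length w = k) cs)"
proof -
  obtain v where v: "weq (gSi P i) (giv P) (Hrel_trunc P i) (concat (map (\<lambda>c. SOME w. w \<in> c) cs)) v"
     "length v \<le> sum_list (map (\<lambda>c. LEAST k. \<exists>w\<in>c. length w = k) cs)"
    using hprod_aux[OF assms] by blast
  have "v \<in> hprod P i cs" unfolding hprod_def hcls_def wcls_def using v(1) by simp
  hence "cx (Sub i (hprod P i cs)) \<le> length v" unfolding cx.simps by (intro Least_le) blast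
  thus ?thesis using v(2) by simp
qed

theorem lemma2p2:
  fixes P :: "'s setting" and D :: "('d, 's) diagram"
    and i :: nat and C :: "'d set set"
  assumes "valid_setting P"
    and "vk_diagram P D"
    and "is_cluster P D i C"
    and "sc_cluster D C"
  shows "bdry_norm1 D C \<le> 3 * area D + bdD_norm1 D \<and>
         (std_filled P D i C \<longrightarrow>
            card C = card (bdry D C) - 2 \<and> cl_normInf D C \<le> bdry_norm1 D C)"
proof -
  note vs = assms(1) and vk = assms(2) and cl = assms(3)
  have fin: "finite (dts D)" using vk unfolding vk_diagram_def by auto
  have rvp: "\<And>d. d \<in> dts D \<Longrightarrow> rvd D d \<in> dts D \<and> rvd D (rvd D d) = d \<and>
      labd D (rvd D d) = linv P (labd D d) \<and> labd D d \<in> hatS P"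
    using vk unfolding vk_diagram_def by auto
  have UC: "\<Union>C \<subseteq> dts D" by (rule cluster_sub[OF vk cl])
  have bsub: "bdry D C \<subseteq> dts D" using UC unfolding bdry_def by auto
  have finb: "finite (bdry D C)" using bsub fin finite_subset by blast
  have cxr: "\<And>d. d \<in> dts D \<Longrightarrow> cx (labd D (rvd D d)) = cx (labd D d)"
    using rvp cx_linv by metis
  have outsub: "outf D \<subseteq> dts D"
  proof (cases "dts D = {}")
    case True then show ?thesis using vk unfolding vk_diagram_def by auto
  next
    case False then show ?thesis using vk faces_sub[OF vk] unfolding vk_diagram_def by auto
  qed
  have cellsfin: "finite (cells D)"
  proof -
    have "faces D \<subseteq> Pow (dts D)" using faces_sub[OF vk] by auto
    thus ?thesis unfolding cells_def using fin by (meson finite_Diff finite_Pow_iff finite_subset)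
  qed
  have part1: "bdry_norm1 D C \<le> 3 * area D + bdD_norm1 D"
  proof -
    define A where "A = {d \<in> bdry D C. rvd D d \<in> outf D}"
    define B where "B = bdry D C - A"
    have AB: "A \<subseteq> bdry D C" unfolding A_def by auto
    have injr: "inj_on (rvd D) (dts D)" using rvp unfolding inj_on_def by metis
    have "bdry_norm1 D C = (\<Sum>d\<in>B. cx (labd D d)) + (\<Sum>d\<in>A. cx (labd D d))"
      unfolding bdry_norm1_def B_def using sum.subset_diff[OF AB finb] by simp
    moreover have "(\<Sum>d\<in>A. cx (labd D d)) \<le> bdD_norm1 D"
    proof -
      have "(\<Sum>d\<in>A. cx (labd D d)) = (\<Sum>d\<in>A. cx (labd D (rvd D d)))"
        using AB bsub cxr by (intro sum.cong) auto
      also have "\<dots> = (\<Sum>e\<in>rvd D ` A. cx (labd D e))"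
        using sum.reindex[OF inj_on_subset[OF injr], of A "\<lambda>e. cx (labd D e)"] AB bsub by auto
      also have "\<dots> \<le> (\<Sum>e\<in>outf D. cx (labd D e))"
        using outsub fin by (intro sum_mono2) (auto simp: A_def intro: finite_subset)
      finally show ?thesis unfolding bdD_norm1_def .
    qed
    moreover have "(\<Sum>d\<in>B. cx (labd D d)) \<le> 3 * area D"
    proof -
      have Bp: "\<And>d. d \<in> B \<Longrightarrow> cx (labd D d) \<le> 1 \<and> rvd D d \<in> \<Union>(cells D)"
        using bdry_dart[OF vs vk cl] unfolding B_def A_def by blast
      have "(\<Sum>d\<in>B. cx (labd D d)) \<le> (\<Sum>d\<in>B. 1)" using Bp by (intro sum_mono) auto
      also have "\<dots> = card B" by simp
      also have "\<dots> = card (rvd D ` B)"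
      proof -
        have "B \<subseteq> dts D" using bsub unfolding B_def by auto
        thus ?thesis using card_image[OF inj_on_subset[OF injr]] by metis
      qed
      also have "\<dots> \<le> card (\<Union>(cells D))"
      proof (rule card_mono)
        show "finite (\<Union>(cells D))" using cellsfin faces_sub[OF vk] fin
          unfolding cells_def by (meson DiffD1 finite_UnionD finite_Union finite_subset)
        show "rvd D ` B \<subseteq> \<Union>(cells D)" using Bp by auto
      qed
      also have "\<dots> \<le> (\<Sum>g\<in>cells D. card g)" by (rule card_Union_le_sum_card)
      also have "\<dots> \<le> (\<Sum>g\<in>cells D. 3)" using cell_card[OF vs vk] by (intro sum_mono) auto
      also have "\<dots> = 3 * area D" unfolding area_def by simp
      finally show ?thesis .
    qed
    ultimately show ?thesis by linarith
  qed
  have part2: "std_filled P D i C \<Longrightarrow>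
            card C = card (bdry D C) - 2 \<and> cl_normInf D C \<le> bdry_norm1 D C"
  proof -
    assume "std_filled P D i C"
    then obtain b m e where m: "m = card (bdry D C)" "3 \<le> m"
       and bb: "bij_betw b {..<m} (bdry D C)" and cC: "card C = m - 2"
       and ej: "\<forall>j\<in>{2..m-2}. e j \<in> \<Union>C \<and> rvd D (e j) \<in> \<Union>C \<and>
            tailv D (e j) = tailv D (b 0) \<and> headv D (e j) = tailv D (b j) \<and>
            labd D (e j) = Sub i (hprod P i (map (\<lambda>k. subel (labd D (b k))) [0..<j]))"
       and int: "\<forall>d\<in>\<Union>C. rvd D d \<in> \<Union>C \<longrightarrow> (\<exists>j\<in>{2..m-2}. d = e j \<or> d = rvd D (e j))"
      unfolding std_filled_def
      apply (elim exE conjE)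
      apply (rule that)
           apply assumption+
      done
    define N where "N = bdry_norm1 D C"
    have bk: "\<And>k. k < m \<Longrightarrow> b k \<in> bdry D C" using bb unfolding bij_betw_def by auto
    have bkl: "\<And>k. k < m \<Longrightarrow> \<exists>c. labd D (b k) = Sub i c \<and> c \<in> Hgrp P i"
    proof -
      fix k assume k: "k < m"
      have "b k \<in> \<Union>C" using bk[OF k] unfolding bdry_def by auto
      then obtain c where c: "labd D (b k) = Sub i c" using cluster_letter[OF vk cl] by blast
      have "labd D (b k) \<in> hatS P" using rvp bk[OF k] bsub by auto
      then show "\<exists>c. labd D (b k) = Sub i c \<and> c \<in> Hgrp P i" using c unfolding hatS_def by auto
    qed
    have Nsum: "N = (\<Sum>k<m. cx (labd D (b k)))"
      unfolding N_def bdry_norm1_def using sum.reindex_bij_betw[OF bb, of "\<lambda>d. cx (labd D d)"] by simp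
    have bdN: "\<And>d. d \<in> bdry D C \<Longrightarrow> cx (labd D d) \<le> N"
      unfolding N_def bdry_norm1_def using finb by (intro member_le_sum) auto
    have eN: "\<And>j. j \<in> {2..m-2} \<Longrightarrow> cx (labd D (e j)) \<le> N"
    proof -
      fix j assume j: "j \<in> {2..m-2}"
      have jm: "j < m" using j m(2) by auto
      let ?cs = "map (\<lambda>k. subel (labd D (b k))) [0..<j]"
      have hg: "\<forall>c\<in>set ?cs. c \<in> Hgrp P i"
      proof
        fix c assume "c \<in> set ?cs"
        then obtain k where k: "k < j" "c = subel (labd D (b k))" by auto
        obtain c' where "labd D (b k) = Sub i c'" "c' \<in> Hgrp P i" using bkl[of k] k jm by auto
        then show "c \<in> Hgrp P i" using k by simp
      qed
      have "cx (labd D (e j)) = cx (Sub i (hprod P i ?cs))" using ej j by simp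
      also have "\<dots> \<le> sum_list (map (\<lambda>c. LEAST k. \<exists>w\<in>c. length w = k) ?cs)"
        by (rule hprod_cx[OF hg])
      also have "\<dots> = sum_list (map (\<lambda>k. cx (labd D (b k))) [0..<j])"
      proof -
        have "\<And>k. k \<in> set [0..<j] \<Longrightarrow> (LEAST n. \<exists>w\<in>subel (labd D (b k)). length w = n) = cx (labd D (b k))"
        proof -
          fix k assume "k \<in> set [0..<j]"
          then obtain c' where "labd D (b k) = Sub i c'" using bkl[of k] jm by auto
          then show "(LEAST n. \<exists>w\<in>subel (labd D (b k)). length w = n) = cx (labd D (b k))" by simp
        qed
        hence "map (\<lambda>k. (LEAST n. \<exists>w\<in>subel (labd D (b k)). length w = n)) [0..<j]
             = map (\<lambda>k. cx (labd D (b k))) [0..<j]" by (rule map_cong[OF refl])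
        then show ?thesis by (simp only: map_map comp_def)
      qed
      also have "\<dots> = (\<Sum>k\<in>{..<j}. cx (labd D (b k)))"
        by (simp add: sum_set_upt_conv_sum_list_nat[symmetric] atLeast0LessThan)
      also have "\<dots> \<le> (\<Sum>k<m. cx (labd D (b k)))" using jm by (intro sum_mono2) auto
      finally show "cx (labd D (e j)) \<le> N" using Nsum by simp
    qed
    have inC: "\<And>x. x \<in> \<Union>C \<Longrightarrow> cx (labd D x) \<le> N"
    proof -
      fix x assume x: "x \<in> \<Union>C"
      show "cx (labd D x) \<le> N"
      proof (cases "rvd D x \<in> \<Union>C")
        case False then show ?thesis using bdN x unfolding bdry_def by auto
      next
        case True
        then obtain j where j: "j \<in> {2..m-2}" "x = e j \<or> x = rvd D (e j)" using int x by blast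
        have "e j \<in> dts D" using ej j UC by auto
        then show ?thesis using eN[OF j(1)] j(2) cxr by auto
      qed
    qed
    have allN: "\<And>x. x \<in> cdarts D C \<Longrightarrow> cx (labd D x) \<le> N"
    proof -
      fix x assume "x \<in> cdarts D C"
      then consider "x \<in> \<Union>C" | y where "y \<in> \<Union>C" "x = rvd D y" unfolding cdarts_def by auto
      then show "cx (labd D x) \<le> N"
      proof cases
        case 1 then show ?thesis by (rule inC)
      next
        case 2
        have "y \<in> dts D" using 2(1) UC by auto
        then show ?thesis using inC[OF 2(1)] cxr 2(2) by simp
      qed
    qed
    obtain f0 where f0: "htype P D i f0" "C = {g. (f0, g) \<in> (cadj P D i)\<^sup>*}"
      using cl unfolding is_cluster_def by auto
    have "f0 \<in> faces D" using f0(1) unfolding htype_def cells_def by auto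
    then obtain d0 where "f0 = orb (nxd D) d0" unfolding faces_def by auto
    hence "d0 \<in> f0" using self_orb by metis
    hence ne: "cdarts D C \<noteq> {}" using f0(2) unfolding cdarts_def by auto
    have cfin: "finite (cdarts D C)" using UC rvp fin unfolding cdarts_def
      by (meson finite_Un finite_imageI finite_subset)
    have "cl_normInf D C \<le> N" unfolding cl_normInf_def
      using cfin ne allN by (subst Max_le_iff) auto
    thus ?thesis using cC m N_def by simp
  qed
  show ?thesis using part1 part2 by blast
qed

end
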